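(* Let $A\in\mathbb{R}^{m\times N}$, $K_1,K_{-1}\subseteq[N]$ disjoint, $K=K_1\cup K_{-1}$, $x_\pm=\mathbb{1}_{K_1}-\mathbb{1}_{K_{-1}}$, $0<\rho<1$ and $\tau>0$. The following are equivalent: (i) $A$ satisfies the robust bipolar ternary null space property with constants $\rho,\tau$ relative to $K_{-1},K_1$; (ii) for every $z\in[-1,1]^N$, $|K|-\sum_{i\in K_1}z_i+\sum_{i\in K_{-1}}z_i\le\rho\|z_{K^C}\|_1+\tau\|A(z-x_\pm)\|_2$.
   Context: $\mathbb{1}_S$ has entries $1$ on $S$, $0$ elsewhere; $K^C=[N]\setminus K$; $z_S$ agrees with $z$ on $S$ and is zero elsewhere. $H_{K_1,K_{-1}}=\{w\in\mathbb{R}^N: w_i\le0\text{ for } i\in K_1,\ w_i\ge0 \text{ for } i\in K_{-1}\}$. $A$ satisfies the robust bipolar ternary null space property with constants $\rho,\tau$ relative to $K_{-1},K_1$ if $\sum_{i\in K_{-1}}v_i-\sum_{i\in K_1}v_i\le\rho\sum_{i\in K^C}|v_i|+\tau\|Av\|_2$ for every $v\in H_{K_1,K_{-1}}$. *)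

theory Defs
  imports "HOL-Analysis.Analysis"
begin

text \<open>Vectors in R^N are real^'n (index type 'n finite, N = CARD('n)); matrices
A in R^(m x N) are real^'n^'m. Subsets of [N] are sets of indices of type 'n.\<close>

definition H_set :: "'n::finite set \<Rightarrow> 'n set \<Rightarrow> (real^'n) set" where
  "H_set K1 Km1 = {w. (\<forall>i\<in>K1. w $ i \<le> 0) \<and> (\<forall>i\<in>Km1. w $ i \<ge> 0)}"

definition robust_bipolar_ternary_NSP ::
  "real^'n::finite^'m::finite \<Rightarrow> real \<Rightarrow> real \<Rightarrow> 'n set \<Rightarrow> 'n set \<Rightarrow> bool" where
  "robust_bipolar_ternary_NSP A \<rho> \<tau> Km1 K1 \<longleftrightarrow>
     (\<forall>v\<in>H_set K1 Km1.
        (\<Sum>i\<in>Km1. v $ i) - (\<Sum>i\<in>K1. v $ i)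
          \<le> \<rho> * (\<Sum>i\<in>- (K1 \<union> Km1). \<bar>v $ i\<bar>) + \<tau> * norm (A *v v))"

definition indic_vec :: "'n::finite set \<Rightarrow> real^'n" where
  "indic_vec S = (\<chi> i. if i \<in> S then 1 else 0)"

definition restrict_vec :: "real^'n::finite \<Rightarrow> 'n set \<Rightarrow> real^'n" where
  "restrict_vec z S = (\<chi> i. if i \<in> S then z $ i else 0)"

definition l1norm :: "real^'n::finite \<Rightarrow> real" where
  "l1norm z = (\<Sum>i\<in>UNIV. \<bar>z $ i\<bar>)"

end

theory Submission
  imports Defs
begin

lemma key_sum:
  fixes z :: "real^'n::finite"
  assumes d: "K1 \<inter> Km1 = {}"
  shows "(\<Sum>i\<in>Km1. (z - (indic_vec K1 - indic_vec Km1)) $ i) - (\<Sum>i\<in>K1. (z - (indic_vec K1 - indic_vec Km1)) $ i)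
     = real (card (K1 \<union> Km1)) - (\<Sum>i\<in>K1. z $ i) + (\<Sum>i\<in>Km1. z $ i)"
proof -
  have a: "(\<Sum>i\<in>Km1. (z - (indic_vec K1 - indic_vec Km1)) $ i) = (\<Sum>i\<in>Km1. z $ i + 1)"
    by (rule sum.cong) (use d in \<open>auto simp: indic_vec_def\<close>)
  have b: "(\<Sum>i\<in>K1. (z - (indic_vec K1 - indic_vec Km1)) $ i) = (\<Sum>i\<in>K1. z $ i - 1)"
    by (rule sum.cong) (use d in \<open>auto simp: indic_vec_def\<close>)
  have c: "card (K1 \<union> Km1) = card K1 + card Km1"
    using d by (simp add: card_Un_disjoint)
  show ?thesis unfolding a b c by (simp add: sum.distrib sum_subtractf)
qed

lemma key_l1:
  fixes z :: "real^'n::finite"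
  shows "l1norm (restrict_vec z (- (K1 \<union> Km1))) = (\<Sum>i\<in>- (K1 \<union> Km1). \<bar>(z - (indic_vec K1 - indic_vec Km1)) $ i\<bar>)"
proof -
  have "l1norm (restrict_vec z (- (K1 \<union> Km1))) = (\<Sum>i\<in>UNIV. if i \<in> - (K1 \<union> Km1) then \<bar>z $ i\<bar> else 0)"
    unfolding l1norm_def restrict_vec_def by (rule sum.cong) auto
  also have "\<dots> = (\<Sum>i\<in>- (K1 \<union> Km1). \<bar>z $ i\<bar>)"
    by (simp add: sum.If_cases Compl_eq)
  also have "\<dots> = (\<Sum>i\<in>- (K1 \<union> Km1). \<bar>(z - (indic_vec K1 - indic_vec Km1)) $ i\<bar>)"
    by (rule sum.cong) (auto simp: indic_vec_def)
  finally show ?thesis .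
qed

theorem lemmaA1:
  fixes A :: "real^'n::finite^'m::finite"
    and K1 Km1 :: "'n set" and \<rho> \<tau> :: real
  assumes "K1 \<inter> Km1 = {}"
    and "0 < \<rho>" and "\<rho> < 1" and "0 < \<tau>"
  shows "robust_bipolar_ternary_NSP A \<rho> \<tau> Km1 K1 \<longleftrightarrow>
    (\<forall>z::real^'n. (\<forall>i. -1 \<le> z $ i \<and> z $ i \<le> 1) \<longrightarrow>
       real (card (K1 \<union> Km1)) - (\<Sum>i\<in>K1. z $ i) + (\<Sum>i\<in>Km1. z $ i)
         \<le> \<rho> * l1norm (restrict_vec z (- (K1 \<union> Km1)))
           + \<tau> * norm (A *v (z - (indic_vec K1 - indic_vec Km1))))"
proof
  assume N: "robust_bipolar_ternary_NSP A \<rho> \<tau> Km1 K1"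
  show "\<forall>z::real^'n. (\<forall>i. -1 \<le> z $ i \<and> z $ i \<le> 1) \<longrightarrow>
       real (card (K1 \<union> Km1)) - (\<Sum>i\<in>K1. z $ i) + (\<Sum>i\<in>Km1. z $ i)
         \<le> \<rho> * l1norm (restrict_vec z (- (K1 \<union> Km1)))
           + \<tau> * norm (A *v (z - (indic_vec K1 - indic_vec Km1)))"
  proof (intro allI impI)
    fix z :: "real^'n" assume z: "\<forall>i. -1 \<le> z $ i \<and> z $ i \<le> 1"
    let ?v = "z - (indic_vec K1 - indic_vec Km1)"
    have "?v \<in> H_set K1 Km1"
      using z assms(1) by (auto simp: H_set_def indic_vec_def)
    with N have "(\<Sum>i\<in>Km1. ?v $ i) - (\<Sum>i\<in>K1. ?v $ i)
          \<le> \<rho> * (\<Sum>i\<in>- (K1 \<union> Km1). \<bar>?v $ i\<bar>) + \<tau> * norm (A *v ?v)"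
      unfolding robust_bipolar_ternary_NSP_def by blast
    then show "real (card (K1 \<union> Km1)) - (\<Sum>i\<in>K1. z $ i) + (\<Sum>i\<in>Km1. z $ i)
         \<le> \<rho> * l1norm (restrict_vec z (- (K1 \<union> Km1)))
           + \<tau> * norm (A *v ?v)"
      using key_sum[OF assms(1), of z] key_l1[of z K1 Km1] by simp
  qed
next
  assume Z: "\<forall>z::real^'n. (\<forall>i. -1 \<le> z $ i \<and> z $ i \<le> 1) \<longrightarrow>
       real (card (K1 \<union> Km1)) - (\<Sum>i\<in>K1. z $ i) + (\<Sum>i\<in>Km1. z $ i)
         \<le> \<rho> * l1norm (restrict_vec z (- (K1 \<union> Km1)))
           + \<tau> * norm (A *v (z - (indic_vec K1 - indic_vec Km1)))"
  show "robust_bipolar_ternary_NSP A \<rho> \<tau> Km1 K1"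
    unfolding robust_bipolar_ternary_NSP_def
  proof
    fix v :: "real^'n" assume v: "v \<in> H_set K1 Km1"
    define L where "L = (\<Sum>i\<in>UNIV. \<bar>v $ i\<bar>)"
    define t where "t = 1 / (1 + L)"
    have L0: "L \<ge> 0" unfolding L_def by (simp add: sum_nonneg)
    have t0: "t > 0" using L0 unfolding t_def by simp
    have vi: "\<bar>v $ i\<bar> \<le> L" for i
      unfolding L_def by (rule member_le_sum) auto
    have tvi: "\<bar>t * v $ i\<bar> \<le> 1" for i
    proof -
      have "\<bar>t * v $ i\<bar> = \<bar>v $ i\<bar> / (1 + L)" using L0 by (simp add: t_def abs_mult)
      also have "\<dots> \<le> 1" using vi[of i] L0 by simp
      finally show ?thesis .
    qed
    define z where "z = (indic_vec K1 - indic_vec Km1) + t *\<^sub>R v"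
    have zv: "z - (indic_vec K1 - indic_vec Km1) = t *\<^sub>R v" unfolding z_def by simp
    have zb: "\<forall>i. -1 \<le> z $ i \<and> z $ i \<le> 1"
    proof
      fix i
      have tv: "-1 \<le> t * v $ i" "t * v $ i \<le> 1" using tvi[of i] by auto
      show "-1 \<le> z $ i \<and> z $ i \<le> 1"
      proof (cases "i \<in> K1")
        case True
        then have "i \<notin> Km1" using assms(1) by auto
        moreover have "v $ i \<le> 0" using v True by (auto simp: H_set_def)
        then have "t * v $ i \<le> 0" using t0 by (simp add: mult_nonneg_nonpos)
        ultimately show ?thesis using True tv by (simp add: z_def indic_vec_def)
      next
        case False
        show ?thesis
        proof (cases "i \<in> Km1")
          case True
          have "v $ i \<ge> 0" using v True by (auto simp: H_set_def)
          then have "t * v $ i \<ge> 0" using t0 by simp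
          then show ?thesis using True False tv by (simp add: z_def indic_vec_def)
        next
          case F2: False
          then show ?thesis using False tv by (simp add: z_def indic_vec_def)
        qed
      qed
    qed
    have "(\<Sum>i\<in>Km1. (t *\<^sub>R v) $ i) - (\<Sum>i\<in>K1. (t *\<^sub>R v) $ i)
       \<le> \<rho> * (\<Sum>i\<in>- (K1 \<union> Km1). \<bar>(t *\<^sub>R v) $ i\<bar>) + \<tau> * norm (A *v (t *\<^sub>R v))"
      using Z[rule_format, of z, OF zb[rule_format]] key_sum[OF assms(1), of z] key_l1[of z K1 Km1]
      unfolding zv by simp
    then have "t * ((\<Sum>i\<in>Km1. v $ i) - (\<Sum>i\<in>K1. v $ i))
       \<le> t * (\<rho> * (\<Sum>i\<in>- (K1 \<union> Km1). \<bar>v $ i\<bar>) + \<tau> * norm (A *v v))"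
      using t0 by (simp add: sum_distrib_left[symmetric] abs_mult matrix_vector_mult_scaleR
          algebra_simps)
    then show "(\<Sum>i\<in>Km1. v $ i) - (\<Sum>i\<in>K1. v $ i)
          \<le> \<rho> * (\<Sum>i\<in>- (K1 \<union> Km1). \<bar>v $ i\<bar>) + \<tau> * norm (A *v v)"
      using t0 by simp
  qed
qed

end
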